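(* Let $(W,S)$ be a Coxeter group with $m_{st}\in\{1,2,3\}$ for all $s,t\in S$, in the one-parameter case, and let $(\mathfrak C,I,m)$ be a $W$-graph with weights in $\mathbb Z[v^{\pm1}]$ all of which are nonnegative integers, i.e. $m^s_{xy}\in\mathbb N$ for all $x,y\in\mathfrak C$, $s\in S$. Let $x,y\in\mathfrak C$ be such that $I(x)$ and $I(y)$ are joined by a transversal edge of the compatibility graph. Then $m^s_{xy}=m^t_{yx}\in\{0,1\}$ for all $s\in I(x)\setminus I(y)$ and $t\in I(y)\setminus I(x)$.
   Context: One-parameter case: $\Gamma=\mathbb Z$, $L(s)=1$, $v_s=v$, $H$ the $\mathbb Z[v^{\pm1}]$-algebra with generators $T_s$, relations $T_s^2=1+(v-v^{-1})T_s$ and braid relations $T_sT_tT_s\cdots=T_tT_sT_t\cdots$ ($m_{st}$ factors). A $W$-graph with weights in a commutative $\mathbb Z[v^{\pm1}]$-algebra $k$ is a set $\mathfrak C$ with a map $I:\mathfrak C\to2^S$ and column-finite matrices $m^s\in k^{\mathfrak C\times\mathfrak C}$ ($s\in S$) such that $m^s_{xy}\neq0\Rightarrow s\in I(x)\setminus I(y)$ and the matrices $\omega(T_s)_{xy}:=-v^{-1}$ if $x=y$, $s\in I(x)$; $v$ if $x=y$, $s\notin I(x)$; $m^s_{xy}$ otherwise, define a representation of $H$ on the free module $k^{(\mathfrak C)}$. Two subsets $I,J\subseteq S$ are joined by a transversal edge of the compatibility graph if $I\setminus J\neq\emptyset$, $J\setminus I\neq\emptyset$, and every $s\in I\setminus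 J$ is joined to every $t\in J\setminus I$ in the Dynkin diagram (i.e. $m_{st}\ge3$). *)

theory Defs
  imports "HOL-Computational_Algebra.Formal_Laurent_Series"
begin

text \<open>Laurent polynomial ring Z[v,v^-1] is realised inside the ring of integer
formal Laurent series (an injective ring embedding); v = fls_X, v^-1 = fls_X_inv.\<close>

abbreviation lv :: "int fls" where "lv \<equiv> fls_X"
abbreviation lv_inv :: "int fls" where "lv_inv \<equiv> fls_X_inv"

definition coxeter_matrix_123 :: "'s set \<Rightarrow> ('s \<Rightarrow> 's \<Rightarrow> nat) \<Rightarrow> bool" where
  "coxeter_matrix_123 S M \<longleftrightarrow>
     (\<forall>s\<in>S. M s s = 1) \<and>
     (\<forall>s\<in>S. \<forall>t\<in>S. M s t = M t s) \<and>
     (\<forall>s\<in>S. \<forall>t\<in>S. s \<noteq> t \<longrightarrow> M s t \<ge> 2) \<and>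
     (\<forall>s\<in>S. \<forall>t\<in>S. M s t \<in> {1,2,3})"

definition col_finite :: "('c \<Rightarrow> 'c \<Rightarrow> int fls) \<Rightarrow> bool" where
  "col_finite A \<longleftrightarrow> (\<forall>y. finite {x. A x y \<noteq> 0})"

definition mmul :: "('c \<Rightarrow> 'c \<Rightarrow> int fls) \<Rightarrow> ('c \<Rightarrow> 'c \<Rightarrow> int fls) \<Rightarrow> ('c \<Rightarrow> 'c \<Rightarrow> int fls)" where
  "mmul A B = (\<lambda>x z. \<Sum>y\<in>{y. B y z \<noteq> 0}. A x y * B y z)"

definition mid :: "'c \<Rightarrow> 'c \<Rightarrow> int fls" where
  "mid = (\<lambda>x z. if x = z then 1 else 0)"

fun alt_prod :: "('c \<Rightarrow> 'c \<Rightarrow> int fls) \<Rightarrow> ('c \<Rightarrow> 'c \<Rightarrow> int fls) \<Rightarrow> nat \<Rightarrow> ('c \<Rightarrow> 'c \<Rightarrow> int fls)" where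
  "alt_prod A B 0 = mid"
| "alt_prod A B (Suc n) = mmul A (alt_prod B A n)"

definition omega :: "('c \<Rightarrow> 's set) \<Rightarrow> ('s \<Rightarrow> 'c \<Rightarrow> 'c \<Rightarrow> nat) \<Rightarrow> 's \<Rightarrow> 'c \<Rightarrow> 'c \<Rightarrow> int fls" where
  "omega I m s x y =
     (if x = y then (if s \<in> I x then - lv_inv else lv) else of_nat (m s x y))"

text \<open>W-graph (one-parameter case) on the vertex set UNIV :: 'c set, with weights
nonnegative integers, seen in Z[v,v^-1]: the matrices omega(T_s) satisfy the
quadratic and braid relations of the Hecke algebra, i.e. define a representation
on the free module with basis 'c.\<close>
definition is_W_graph_nat ::
  "'s set \<Rightarrow> ('s \<Rightarrow> 's \<Rightarrow> nat) \<Rightarrow> ('c \<Rightarrow> 's set) \<Rightarrow> ('s \<Rightarrow> 'c \<Rightarrow> 'c \<Rightarrow> nat) \<Rightarrow> bool" where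
  "is_W_graph_nat S M I m \<longleftrightarrow>
     (\<forall>x. I x \<subseteq> S) \<and>
     (\<forall>s\<in>S. \<forall>y. finite {x. m s x y \<noteq> 0}) \<and>
     (\<forall>s\<in>S. \<forall>x y. m s x y \<noteq> 0 \<longrightarrow> s \<in> I x - I y) \<and>
     (\<forall>s\<in>S. mmul (omega I m s) (omega I m s)
              = (\<lambda>x z. mid x z + (lv - lv_inv) * omega I m s x z)) \<and>
     (\<forall>s\<in>S. \<forall>t\<in>S. s \<noteq> t \<longrightarrow>
        alt_prod (omega I m s) (omega I m t) (M s t)
          = alt_prod (omega I m t) (omega I m s) (M s t))"

definition transversal_edge :: "('s \<Rightarrow> 's \<Rightarrow> nat) \<Rightarrow> 's set \<Rightarrow> 's set \<Rightarrow> bool" where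
  "transversal_edge M J K \<longleftrightarrow>
     J - K \<noteq> {} \<and> K - J \<noteq> {} \<and> (\<forall>s\<in>J - K. \<forall>t\<in>K - J. M s t \<ge> 3)"

end

theory Submission
  imports Defs
begin

lemma lvlvi: "lv * lv_inv = 1"
  by (intro fls_eqI) (simp add: fls_X_inv_times_conv_shift)
lemma lvilv: "lv_inv * lv = 1"
  by (intro fls_eqI) (simp add: fls_X_inv_times_conv_shift)

lemma lv_ne: "lv + lv_inv \<noteq> 0"
proof
  assume "lv + lv_inv = 0"
  hence "fls_nth (lv + lv_inv) 1 = 0" by simp
  thus False by simp
qed

lemma N1: fixes N :: nat assumes "(of_nat N - 1) * (- lv_inv) = lv * (of_nat N - 1)"
  shows "N = 1"
proof -
  have "(of_nat N - 1) * (lv + lv_inv) = lv * (of_nat N - 1) - (of_nat N - 1) * (- lv_inv)"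
    by (simp add: algebra_simps)
  also have "\<dots> = 0" using assms by simp
  finally have "(of_nat N :: int fls) - 1 = 0" using lv_ne by simp
  hence "(of_nat N :: int fls) = 1" by simp
  thus ?thesis by (metis of_nat_eq_1_iff)
qed

lemma mmul_super:
  assumes "finite F" "{y. B y z \<noteq> 0} \<subseteq> F"
  shows "mmul A B x z = (\<Sum>y\<in>F. A x y * B y z)"
proof -
  have fin: "finite {y. B y z \<noteq> 0}" using assms finite_subset by blast
  show ?thesis unfolding mmul_def
    by (rule sum.mono_neutral_left[OF assms(1) assms(2)]) auto
qed

lemma mmul_col:
  assumes "finite E" "\<And>y. B y z = (if y = z then d else g y)" "g z = 0"
    "\<And>y. y \<notin> E \<Longrightarrow> g y = 0"
  shows "mmul A B x z = A x z * d + (\<Sum>y\<in>E. A x y * g y)"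
proof -
  have "mmul A B x z = (\<Sum>y\<in>insert z E. A x y * B y z)"
    by (rule mmul_super) (use assms in auto)
  also have "\<dots> = (\<Sum>y\<in>insert z E. A x y * (if y = z then d else 0) + A x y * g y)"
    by (rule sum.cong) (use assms in \<open>auto simp: algebra_simps\<close>)
  also have "\<dots> = (\<Sum>y\<in>insert z E. A x y * (if y = z then d else 0)) + (\<Sum>y\<in>insert z E. A x y * g y)"
    by (simp add: sum.distrib)
  also have "(\<Sum>y\<in>insert z E. A x y * (if y = z then d else 0)) = A x z * d"
  proof -
    have "(\<Sum>y\<in>insert z E. A x y * (if y = z then d else 0)) = (\<Sum>y\<in>insert z E. if y = z then A x y * d else 0)"
      by (rule sum.cong) auto
    also have "\<dots> = A x z * d" using assms(1) by (simp add: sum.delta)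
    finally show ?thesis .
  qed
  also have "(\<Sum>y\<in>insert z E. A x y * g y) = (\<Sum>y\<in>E. A x y * g y)"
    using assms by (cases "z \<in> E") (auto simp: insert_absorb)
  finally show ?thesis .
qed

lemma mmul_mid: "mmul A mid = A"
proof (intro ext)
  fix x z
  show "mmul A mid x z = A x z"
    by (subst mmul_super[where F="{z}"]) (auto simp: mid_def)
qed

lemma mmul_assoc:
  assumes "col_finite B" "col_finite C"
  shows "mmul (mmul A B) C = mmul A (mmul B C)"
proof (intro ext)
  fix x z
  define W where "W = {w. C w z \<noteq> 0}"
  define Y where "Y = (\<Union>w\<in>W. {y. B y w \<noteq> 0})"
  have fW: "finite W" using assms(2) unfolding W_def col_finite_def by auto
  have fY: "finite Y" using assms(1) fW unfolding Y_def col_finite_def by auto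
  have BC: "mmul B C y z = (\<Sum>w\<in>W. B y w * C w z)" for y
    by (rule mmul_super[OF fW]) (auto simp: W_def)
  have supp: "{y. mmul B C y z \<noteq> 0} \<subseteq> Y"
  proof
    fix y assume "y \<in> {y. mmul B C y z \<noteq> 0}"
    hence "(\<Sum>w\<in>W. B y w * C w z) \<noteq> 0" using BC by simp
    then obtain w where "w \<in> W" "B y w * C w z \<noteq> 0" by (meson sum.neutral)
    thus "y \<in> Y" unfolding Y_def by auto
  qed
  have "mmul A (mmul B C) x z = (\<Sum>y\<in>Y. A x y * mmul B C y z)"
    by (rule mmul_super[where B="mmul B C", OF fY supp])
  also have "\<dots> = (\<Sum>y\<in>Y. \<Sum>w\<in>W. A x y * B y w * C w z)"
    by (simp add: BC sum_distrib_left mult.assoc)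
  also have "\<dots> = (\<Sum>w\<in>W. \<Sum>y\<in>Y. A x y * B y w * C w z)"
    by (rule sum.swap)
  also have "\<dots> = (\<Sum>w\<in>W. mmul A B x w * C w z)"
  proof (rule sum.cong[OF refl])
    fix w assume "w \<in> W"
    have "mmul A B x w = (\<Sum>y\<in>Y. A x y * B y w)"
      by (rule mmul_super[OF fY]) (use \<open>w \<in> W\<close> in \<open>auto simp: Y_def\<close>)
    thus "(\<Sum>y\<in>Y. A x y * B y w * C w z) = mmul A B x w * C w z"
      by (simp add: sum_distrib_right)
  qed
  also have "\<dots> = mmul (mmul A B) C x z"
    using mmul_super[of W C z "mmul A B" x] fW by (simp add: W_def)
  finally show "mmul (mmul A B) C x z = mmul A (mmul B C) x z" by simp
qed

lemma comb:
  fixes A B :: "'c \<Rightarrow> 'c \<Rightarrow> nat"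
  assumes finA: "\<And>u. finite {w. A w u \<noteq> 0}" and finB: "\<And>u. finite {w. B w u \<noteq> 0}"
    and Ny: "(\<Sum>w\<in>{w. A w y \<noteq> 0}. B y w * A w y) = 1"
    and P: "(\<Sum>u\<in>{u. A u y \<noteq> 0}. (\<Sum>w\<in>{w. B w u \<noteq> 0}. A x w * B w u) * A u y) = A x y"
    and Nx: "(\<Sum>w\<in>{w. B w x \<noteq> 0}. A x w * B w x) = 1"
    and pos: "A x y > 0"
  shows "B y x > 0"
proof (rule ccontr)
  assume "\<not> B y x > 0" hence b0: "B y x = 0" by simp
  obtain x' where x': "x' \<in> {w. A w y \<noteq> 0}" "B y x' * A x' y \<noteq> 0"
    using Ny by (metis (no_types, lifting) sum.neutral zero_neq_one)
  have xx': "x' \<noteq> x" using x' b0 by auto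
  define f where "f u = (\<Sum>w\<in>{w. B w u \<noteq> 0}. A x w * B w u) * A u y" for u
  have fx: "f x = A x y" using Nx by (simp add: f_def)
  have "A x y * B y x' \<le> (\<Sum>w\<in>{w. B w x' \<noteq> 0}. A x w * B w x')"
    by (rule member_le_sum[where f="\<lambda>w. A x w * B w x'"]) (use x' finB in auto)
  hence "A x y * B y x' * A x' y \<le> f x'" unfolding f_def by simp
  moreover have "A x y \<le> A x y * B y x' * A x' y" using x' by simp
  ultimately have fx': "A x y \<le> f x'" by linarith
  have "f x + f x' \<le> sum f {u. A u y \<noteq> 0}"
  proof -
    have "sum f {x, x'} \<le> sum f {u. A u y \<noteq> 0}"
      by (rule sum_mono2) (use finA x' pos in auto)
    thus ?thesis using xx' by simp
  qed
  moreover have "sum f {u. A u y \<noteq> 0} = A x y" unfolding f_def by (rule P)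
  ultimately show False using fx fx' pos by linarith
qed

locale wg =
  fixes S :: "'s set" and M :: "'s \<Rightarrow> 's \<Rightarrow> nat"
    and I :: "'c \<Rightarrow> 's set" and m :: "'s \<Rightarrow> 'c \<Rightarrow> 'c \<Rightarrow> nat"
  assumes W: "is_W_graph_nat S M I m"
begin

definition dg :: "'s \<Rightarrow> 'c \<Rightarrow> int fls" where
  "dg s u = (if s \<in> I u then - lv_inv else lv)"

lemma msupp: "s \<in> S \<Longrightarrow> m s w u \<noteq> 0 \<Longrightarrow> s \<in> I w \<and> s \<notin> I u"
  using W unfolding is_W_graph_nat_def by blast

lemma mdiag: "s \<in> S \<Longrightarrow> m s u u = 0"
  using msupp by blast

lemma mfin: "s \<in> S \<Longrightarrow> finite {w. m s w u \<noteq> 0}"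
  using W unfolding is_W_graph_nat_def by blast

lemma Ocol: "omega I m s w u = (if w = u then dg s u else of_nat (m s w u))"
  by (simp add: omega_def dg_def)

lemma Ocf: "s \<in> S \<Longrightarrow> col_finite (omega I m s)"
  unfolding col_finite_def
proof
  fix u assume s: "s \<in> S"
  have "{w. omega I m s w u \<noteq> 0} \<subseteq> insert u {w. m s w u \<noteq> 0}"
    by (auto simp: omega_def)
  thus "finite {w. omega I m s w u \<noteq> 0}" using mfin[OF s] finite_subset by blast
qed

lemma prod: assumes t: "t \<in> S" shows "mmul (omega I m s) (omega I m t) x u =
   omega I m s x u * dg t u + (\<Sum>w\<in>{w. m t w u \<noteq> 0}. omega I m s x w * of_nat (m t w u))"
  by (rule mmul_col[OF mfin[OF t]]) (auto simp: Ocol mdiag t)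

lemma K: "s \<in> S \<Longrightarrow> t \<in> S \<Longrightarrow> alt_prod (omega I m s) (omega I m t) 3 x z =
   mmul (omega I m s) (omega I m t) x z * dg s z
   + (\<Sum>u\<in>{u. m s u z \<noteq> 0}. mmul (omega I m s) (omega I m t) x u * of_nat (m s u z))"
proof -
  assume s: "s \<in> S" and t: "t \<in> S"
  have "alt_prod (omega I m s) (omega I m t) 3 = mmul (omega I m s) (mmul (omega I m t) (omega I m s))"
    by (simp add: eval_nat_numeral mmul_mid)
  also have "\<dots> = mmul (mmul (omega I m s) (omega I m t)) (omega I m s)"
    by (rule mmul_assoc[symmetric]) (use s t Ocf in auto)
  finally have "alt_prod (omega I m s) (omega I m t) 3 x z = mmul (mmul (omega I m s) (omega I m t)) (omega I m s) x z"
    by simp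
  also have "\<dots> = mmul (omega I m s) (omega I m t) x z * dg s z
   + (\<Sum>u\<in>{u. m s u z \<noteq> 0}. mmul (omega I m s) (omega I m t) x u * of_nat (m s u z))"
    by (rule mmul_col[OF mfin[OF s]]) (auto simp: Ocol mdiag s)
  finally show ?thesis .
qed

lemma rowx:
  assumes s: "s \<in> S" and t: "t \<in> S" and tx: "t \<notin> I x"
  shows "mmul (omega I m t) (omega I m s) x u = (if u = x then lv else 0) * dg s u + lv * of_nat (m s x u)"
proof -
  have row: "omega I m t x w = (if w = x then lv else 0)" for w
    using msupp[OF t, of x w] tx by (auto simp: omega_def)
  have "(\<Sum>w\<in>{w. m s w u \<noteq> 0}. omega I m t x w * of_nat (m s w u))
      = (\<Sum>w\<in>{w. m s w u \<noteq> 0}. if w = x then lv * of_nat (m s x u) else 0)"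
    by (rule sum.cong) (auto simp: row)
  also have "\<dots> = lv * of_nat (m s x u)"
    using mfin[OF s] by (simp add: sum.delta)
  finally show ?thesis using prod[OF s, of t x u] row by simp
qed

lemma Nlem:
  assumes s: "s \<in> S" and t: "t \<in> S" and sx: "s \<in> I x" and tx: "t \<notin> I x"
    and br: "alt_prod (omega I m s) (omega I m t) 3 = alt_prod (omega I m t) (omega I m s) 3"
  shows "(\<Sum>w\<in>{w. m t w x \<noteq> 0}. m s x w * m t w x) = 1"
proof -
  define N where "N = (\<Sum>w\<in>{w. m t w x \<noteq> 0}. m s x w * m t w x)"
  have E0: "{u. m s u x \<noteq> 0} = {}" using msupp[OF s] sx by auto
  have sumN: "(\<Sum>w\<in>{w. m t w x \<noteq> 0}. omega I m s x w * of_nat (m t w x)) = of_nat N"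
  proof -
    have "(\<Sum>w\<in>{w. m t w x \<noteq> 0}. omega I m s x w * of_nat (m t w x))
       = (\<Sum>w\<in>{w. m t w x \<noteq> 0}. of_nat (m s x w * m t w x))"
      by (rule sum.cong) (use mdiag[OF t] in \<open>auto simp: omega_def\<close>)
    thus ?thesis by (simp add: N_def)
  qed
  have L: "alt_prod (omega I m s) (omega I m t) 3 x x = (of_nat N - 1) * (- lv_inv)"
  proof -
    have "alt_prod (omega I m s) (omega I m t) 3 x x = mmul (omega I m s) (omega I m t) x x * dg s x"
      using K[OF s t, of x x] E0 by simp
    also have "mmul (omega I m s) (omega I m t) x x = of_nat N - 1"
      using prod[OF t, of s x x] sumN sx tx lvilv by (simp add: omega_def dg_def)
    finally show ?thesis using sx by (simp add: dg_def)
  qed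
  have R: "alt_prod (omega I m t) (omega I m s) 3 x x = lv * (of_nat N - 1)"
  proof -
    have "alt_prod (omega I m t) (omega I m s) 3 x x = mmul (omega I m t) (omega I m s) x x * dg t x
      + (\<Sum>u\<in>{u. m t u x \<noteq> 0}. mmul (omega I m t) (omega I m s) x u * of_nat (m t u x))"
      by (rule K[OF t s])
    also have "mmul (omega I m t) (omega I m s) x x = -1"
      using rowx[OF s t tx, of x] sx mdiag[OF s] lvlvi by (simp add: dg_def)
    also have "(\<Sum>u\<in>{u. m t u x \<noteq> 0}. mmul (omega I m t) (omega I m s) x u * of_nat (m t u x))
       = (\<Sum>u\<in>{u. m t u x \<noteq> 0}. lv * of_nat (m s x u * m t u x))"
      by (rule sum.cong) (use rowx[OF s t tx] mdiag[OF t] in auto)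
    also have "\<dots> = lv * of_nat N"
      by (simp add: N_def sum_distrib_left)
    finally show ?thesis using tx by (simp add: dg_def algebra_simps)
  qed
  have "N = 1" using L R br by (intro N1) metis
  thus ?thesis by (simp add: N_def)
qed

lemma Plem:
  assumes s: "s \<in> S" and t: "t \<in> S" and sx: "s \<in> I x" and tx: "t \<notin> I x"
    and ty: "t \<in> I y" and sy: "s \<notin> I y"
    and br: "alt_prod (omega I m s) (omega I m t) 3 = alt_prod (omega I m t) (omega I m s) 3"
  shows "(\<Sum>u\<in>{u. m s u y \<noteq> 0}. (\<Sum>w\<in>{w. m t w u \<noteq> 0}. m s x w * m t w u) * m s u y) = m s x y"
proof -
  define P where "P = (\<Sum>u\<in>{u. m s u y \<noteq> 0}. (\<Sum>w\<in>{w. m t w u \<noteq> 0}. m s x w * m t w u) * m s u y)"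
  define a where "a = m s x y"
  have xy: "x \<noteq> y" using sx sy by auto
  have Et: "{w. m t w y \<noteq> 0} = {}" using msupp[OF t] ty by auto
  have Rxy: "alt_prod (omega I m t) (omega I m s) 3 x y = - of_nat a"
  proof -
    have "alt_prod (omega I m t) (omega I m s) 3 x y = mmul (omega I m t) (omega I m s) x y * dg t y"
      using K[OF t s, of x y] Et by simp
    thus ?thesis using rowx[OF s t tx, of y] xy ty sy lvlvi
      by (simp add: dg_def a_def algebra_simps)
  qed
  have Lxy: "alt_prod (omega I m s) (omega I m t) 3 x y = - 2 * of_nat a + of_nat P"
  proof -
    have m1: "mmul (omega I m s) (omega I m t) x y = - of_nat a * lv_inv"
      using prod[OF t, of s x y] Et xy ty by (simp add: omega_def dg_def a_def)
    have m2: "mmul (omega I m s) (omega I m t) x u =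
       of_nat (\<Sum>w\<in>{w. m t w u \<noteq> 0}. m s x w * m t w u) - (if u = x then 1 else 0)"
      if u: "m s u y \<noteq> 0" for u
    proof -
      have su: "s \<in> I u" using msupp[OF s u] by simp
      have "(\<Sum>w\<in>{w. m t w u \<noteq> 0}. omega I m s x w * of_nat (m t w u))
         = (\<Sum>w\<in>{w. m t w u \<noteq> 0}. of_nat (m s x w * m t w u))"
        by (rule sum.cong) (use msupp[OF t] tx in \<open>auto simp: omega_def\<close>)
      moreover have "omega I m s x u * dg t u = - (if u = x then 1 else 0)"
        using msupp[OF s, of x u] su tx lvilv by (auto simp: omega_def dg_def)
      ultimately show ?thesis using prod[OF t, of s x u] by simp
    qed
    have "alt_prod (omega I m s) (omega I m t) 3 x y = mmul (omega I m s) (omega I m t) x y * dg s y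
      + (\<Sum>u\<in>{u. m s u y \<noteq> 0}. mmul (omega I m s) (omega I m t) x u * of_nat (m s u y))"
      by (rule K[OF s t])
    also have "mmul (omega I m s) (omega I m t) x y * dg s y = - of_nat a"
      using m1 sy lvilv by (simp add: dg_def mult.assoc)
    also have "(\<Sum>u\<in>{u. m s u y \<noteq> 0}. mmul (omega I m s) (omega I m t) x u * of_nat (m s u y))
       = (\<Sum>u\<in>{u. m s u y \<noteq> 0}. of_nat ((\<Sum>w\<in>{w. m t w u \<noteq> 0}. m s x w * m t w u) * m s u y)
            - (if u = x then of_nat (m s x y) else 0))"
      by (rule sum.cong) (auto simp: m2 algebra_simps)
    also have "\<dots> = of_nat P - of_nat a"
      using mfin[OF s, of y] by (simp add: sum_subtractf sum.delta P_def a_def)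
    finally show ?thesis by simp
  qed
  have "(of_nat P :: int fls) = of_nat a" using Lxy Rxy br by (simp add: algebra_simps)
  hence "P = a" by simp
  thus ?thesis by (simp add: P_def a_def)
qed

end

theorem lemma4p5p5:
  fixes S :: "'s set" and M :: "'s \<Rightarrow> 's \<Rightarrow> nat"
    and I :: "'c \<Rightarrow> 's set" and m :: "'s \<Rightarrow> 'c \<Rightarrow> 'c \<Rightarrow> nat"
    and x y :: 'c
  assumes "coxeter_matrix_123 S M"
    and "is_W_graph_nat S M I m"
    and "transversal_edge M (I x) (I y)"
  shows "\<forall>s\<in>I x - I y. \<forall>t\<in>I y - I x. m s x y = m t y x \<and> m s x y \<in> {0, 1}"
proof (intro ballI)
  fix s t assume s0: "s \<in> I x - I y" and t0: "t \<in> I y - I x"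
  interpret wg S M I m by unfold_locales (rule assms(2))
  have IS: "I z \<subseteq> S" for z using assms(2) unfolding is_W_graph_nat_def by blast
  have s: "s \<in> S" and t: "t \<in> S" using s0 t0 IS by auto
  have st: "s \<noteq> t" using s0 t0 by auto
  have "M s t \<ge> 3" using assms(3) s0 t0 unfolding transversal_edge_def by blast
  moreover have "M s t \<in> {1,2,3}" using assms(1) s t unfolding coxeter_matrix_123_def by blast
  ultimately have M3: "M s t = 3" by auto
  have br: "alt_prod (omega I m s) (omega I m t) 3 = alt_prod (omega I m t) (omega I m s) 3"
    using assms(2) s t st M3 unfolding is_W_graph_nat_def by metis
  have Nx: "(\<Sum>w\<in>{w. m t w x \<noteq> 0}. m s x w * m t w x) = 1"
    by (rule Nlem[OF s t]) (use s0 t0 br in auto)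
  have Ny: "(\<Sum>w\<in>{w. m s w y \<noteq> 0}. m t y w * m s w y) = 1"
    by (rule Nlem[OF t s]) (use s0 t0 br in auto)
  have P: "(\<Sum>u\<in>{u. m s u y \<noteq> 0}. (\<Sum>w\<in>{w. m t w u \<noteq> 0}. m s x w * m t w u) * m s u y) = m s x y"
    by (rule Plem[OF s t]) (use s0 t0 br in auto)
  have Q: "(\<Sum>u\<in>{u. m t u x \<noteq> 0}. (\<Sum>w\<in>{w. m s w u \<noteq> 0}. m t y w * m s w u) * m t u x) = m t y x"
    by (rule Plem[OF t s]) (use s0 t0 br in auto)
  have ab: "m s x y > 0 \<Longrightarrow> m t y x > 0"
    by (rule comb[where A="m s" and B="m t"]) (use mfin s t Ny P Nx in auto)
  have ba: "m t y x > 0 \<Longrightarrow> m s x y > 0"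
    by (rule comb[where A="m t" and B="m s"]) (use mfin s t Ny Q Nx in auto)
  show "m s x y = m t y x \<and> m s x y \<in> {0, 1}"
  proof (cases "m s x y = 0")
    case True thus ?thesis using ba by auto
  next
    case False
    hence bpos: "m t y x > 0" using ab by simp
    have "m s x y * m t y x \<le> (\<Sum>w\<in>{w. m t w x \<noteq> 0}. m s x w * m t w x)"
      by (rule member_le_sum[where f="\<lambda>w. m s x w * m t w x"]) (use bpos mfin[OF t] in auto)
    hence "m s x y * m t y x \<le> 1" using Nx by simp
    hence "m s x y = 1 \<and> m t y x = 1" using False bpos
      by (cases "m s x y"; cases "m t y x") auto
    thus ?thesis by simp
  qed
qed

end
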